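(* Let $A,N_1,\dots,N_m\in\mathbb R^{n\times n}$ with $\sigma(A)\subset\mathbb C_-$, and for $x_0\in\mathbb R^n$ and $u=(u_1,\dots,u_m)^T\in L^2$ let $x(t,x_0,0)$, $t\ge0$, denote the solution to $\dot x(t)=Ax(t)+\sum_{k=1}^m N_kx(t)u_k(t)$, $x(0)=x_0$. Then there exist $\gamma,k_1,k_2>0$ such that $$\|x(t,x_0,0)\|_2^2\le\exp\{\gamma^2\|u^0\|_{L^2}^2\}\,\|x_0\|_2^2\,k_1e^{-k_2t}\qquad\text{for all }t\ge0$$ for all $u\in L^2$ (and all $x_0$).
   Context: $\mathbb C_-=\{z\in\mathbb C:\Re z<0\}$ and $\sigma(\cdot)$ denotes the spectrum. $L^2$ is the set of $u:[0,\infty)\to\mathbb R^m$ with $\|u\|_{L^2}^2=\int_0^\infty u^T(s)u(s)\,ds<\infty$. The vector $u^0=(u^0_1,\dots,u^0_m)^T$ is defined by $u^0_k\equiv 0$ if $N_k=0$ and $u^0_k=u_k$ otherwise. *)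

theory Defs
  imports "HOL-Analysis.Analysis"
begin

definition cmat :: "real^'n^'n \<Rightarrow> complex^'n^'n" where
  "cmat A = (\<chi> i j. complex_of_real (A $ i $ j))"

definition mspectrum :: "real^'n^'n \<Rightarrow> complex set" where
  "mspectrum A = {l. \<exists>v::complex^'n. v \<noteq> 0 \<and> cmat A *v v = l *s v}"

definition L2 :: "(real \<Rightarrow> real^'m) \<Rightarrow> bool" where
  "L2 u \<longleftrightarrow> u \<in> borel_measurable (lebesgue_on {0..}) \<and>
            integrable (lebesgue_on {0..}) (\<lambda>s. (norm (u s))\<^sup>2)"

definition L2norm_sq :: "(real \<Rightarrow> real^'m) \<Rightarrow> real" where
  "L2norm_sq u = integral\<^sup>L (lebesgue_on {0..}) (\<lambda>s. (norm (u s))\<^sup>2)"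

definition u0 :: "('m \<Rightarrow> real^'n^'n) \<Rightarrow> (real \<Rightarrow> real^'m) \<Rightarrow> real \<Rightarrow> real^'m" where
  "u0 N u = (\<lambda>s. \<chi> k. if N k = 0 then 0 else u s $ k)"

text \<open>x is the (Caratheodory) solution on [0,oo) of x' = A x + sum_k N_k x u_k, x(0) = x0,
  written in integral form.\<close>
definition bilin_solution ::
  "real^'n^'n \<Rightarrow> ('m::finite \<Rightarrow> real^'n^'n) \<Rightarrow> (real \<Rightarrow> real^'m) \<Rightarrow> real^'n \<Rightarrow> (real \<Rightarrow> real^'n) \<Rightarrow> bool" where
  "bilin_solution A N u x0 x \<longleftrightarrow> x 0 = x0 \<and>
     (\<forall>t\<ge>0. ((\<lambda>s. A *v x s + (\<Sum>k\<in>UNIV. (u s $ k) *\<^sub>R (N k *v x s))) has_integral (x t - x0)) {0..t})"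

end

theory Submission
  imports Defs "Jordan_Normal_Form.Schur_Decomposition"
begin


locale idx =
  fixes to :: "'n::finite \<Rightarrow> nat"
  assumes bij: "bij_betw to UNIV {0..<CARD('n)}"
begin

definition "fr = inv_into UNIV to"

lemma to_lt: "to i < CARD('n)"
  using bij by (auto simp: bij_betw_def)

lemma fr_to[simp]: "fr (to i) = i"
  unfolding fr_def using bij by (simp add: bij_betw_def inv_into_f_f)

lemma to_fr[simp]: "k < CARD('n) \<Longrightarrow> to (fr k) = k"
  unfolding fr_def using bij by (simp add: bij_betw_def f_inv_into_f)

lemma reidx: "(\<Sum>i\<in>UNIV. f (to i)) = (\<Sum>k\<in>{0..<CARD('n)}. f k)"
  using sum.reindex_bij_betw[OF bij, of f] .

definition cA :: "real^'n^'n \<Rightarrow> complex mat" where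
  "cA A = mat CARD('n) CARD('n) (\<lambda>(i,j). complex_of_real (A $ fr i $ fr j))"

lemma cA_carrier: "cA A \<in> carrier_mat CARD('n) CARD('n)"
  unfolding cA_def by simp

lemma spec:
  assumes "poly (char_poly (cA A)) e = 0"
  shows "e \<in> mspectrum A"
proof -
  have "eigenvalue (cA A) e" using eigenvalue_root_char_poly[OF cA_carrier] assms by simp
  then obtain v where ev: "eigenvector (cA A) v e" unfolding eigenvalue_def by blast
  then have v: "v \<in> carrier_vec CARD('n)" "v \<noteq> 0\<^sub>v CARD('n)" "cA A *\<^sub>v v = e \<cdot>\<^sub>v v"
  proof -
    have d: "dim_row (cA A) = CARD('n)" unfolding cA_def by simp
    show "v \<in> carrier_vec CARD('n)" "v \<noteq> 0\<^sub>v CARD('n)" "cA A *\<^sub>v v = e \<cdot>\<^sub>v v"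
      using ev unfolding eigenvector_def d by auto
  qed
  define v' :: "complex^'n" where "v' = (\<chi> i. vec_index v (to i))"
  obtain k where k: "k < CARD('n)" "vec_index v k \<noteq> 0"
    using v(1,2) by (metis carrier_vecD eq_vecI index_zero_vec(1) index_zero_vec(2))
  have "v' $ fr k \<noteq> 0" unfolding v'_def using k by simp
  then have v'0: "v' \<noteq> 0" by auto
  have "cmat A *v v' = e *s v'"
  proof (rule Finite_Cartesian_Product.vec_eq_iff[THEN iffD2], rule allI)
    fix i
    have "(cmat A *v v') $ i = (\<Sum>j\<in>UNIV. complex_of_real (A $ i $ j) * vec_index v (to j))"
      unfolding matrix_vector_mult_def cmat_def v'_def by simp
    also have "\<dots> = (\<Sum>j\<in>UNIV. (\<lambda>k. complex_of_real (A $ i $ fr k) * vec_index v k) (to j))" by simp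
    also have "\<dots> = (\<Sum>k\<in>{0..<CARD('n)}. complex_of_real (A $ i $ fr k) * vec_index v k)" by (rule reidx)
    also have "\<dots> = vec_index (cA A *\<^sub>v v) (to i)"
      using to_lt[of i] v(1) unfolding cA_def by (simp add: scalar_prod_def)
    also have "\<dots> = e * vec_index v (to i)" using v(3) to_lt[of i] v(1) by simp
    also have "\<dots> = (e *s v') $ i" unfolding v'_def by simp
    finally show "(cmat A *v v') $ i = (e *s v') $ i" .
  qed
  then show ?thesis unfolding mspectrum_def using v'0 by blast
qed

definition mv :: "complex mat \<Rightarrow> (nat \<Rightarrow> complex) \<Rightarrow> nat \<Rightarrow> complex" where
  "mv X v k = (\<Sum>l\<in>{0..<CARD('n)}. X $$ (k,l) * v l)"

lemma mv_mult:
  assumes X: "X \<in> carrier_mat CARD('n) CARD('n)" and Y: "Y \<in> carrier_mat CARD('n) CARD('n)" and k: "k < CARD('n)"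
  shows "mv X (mv Y v) k = mv (X * Y) v k"
proof -
  have XY: "(X * Y) $$ (k,l) = (\<Sum>j\<in>{0..<CARD('n)}. X $$ (k,j) * Y $$ (j,l))" if "l < CARD('n)" for l
    using X Y k that by (simp add: scalar_prod_def)
  have "mv X (mv Y v) k = (\<Sum>j\<in>{0..<CARD('n)}. \<Sum>l\<in>{0..<CARD('n)}. X $$ (k,j) * (Y $$ (j,l) * v l))"
    unfolding mv_def by (simp add: sum_distrib_left)
  also have "\<dots> = (\<Sum>l\<in>{0..<CARD('n)}. \<Sum>j\<in>{0..<CARD('n)}. X $$ (k,j) * (Y $$ (j,l) * v l))"
    by (rule sum.swap)
  also have "\<dots> = (\<Sum>l\<in>{0..<CARD('n)}. (X * Y) $$ (k,l) * v l)"
    by (intro sum.cong refl) (simp add: XY sum_distrib_right mult.assoc)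
  finally show ?thesis unfolding mv_def .
qed

lemma mv_one: "k < CARD('n) \<Longrightarrow> mv (1\<^sub>m CARD('n)) v k = v k"
proof -
  assume k: "k < CARD('n)"
  have "mv (1\<^sub>m CARD('n)) v k = (\<Sum>l\<in>{0..<CARD('n)}. if k = l then v l else 0)"
    unfolding mv_def using k by (intro sum.cong) auto
  also have "\<dots> = v k" using k by simp
  finally show ?thesis .
qed

lemma mv_cong: "(\<And>l. l < CARD('n) \<Longrightarrow> v l = w l) \<Longrightarrow> mv X v k = mv X w k"
  unfolding mv_def by (intro sum.cong) auto

lemma mv_add: "mv X (\<lambda>l. v l + w l) k = mv X v k + mv X w k"
  unfolding mv_def by (simp add: distrib_left sum.distrib)

lemma mv_scale: "mv X (\<lambda>l. r * v l) k = r * mv X v k"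
  unfolding mv_def by (simp add: sum_distrib_left algebra_simps)

end

locale sdata = idx +
  fixes A :: "real^'a^'a" and B P Q :: "complex mat" and eps rho K :: real
  assumes carr: "B \<in> carrier_mat CARD('a) CARD('a)" "P \<in> carrier_mat CARD('a) CARD('a)"
      "Q \<in> carrier_mat CARD('a) CARD('a)"
    and PQ: "P * Q = 1\<^sub>m CARD('a)" and QP: "Q * P = 1\<^sub>m CARD('a)" and APBQ: "cA A = P * B * Q"
    and upper: "\<And>i j. j < i \<Longrightarrow> i < CARD('a) \<Longrightarrow> B $$ (i,j) = 0"
    and diag: "\<And>i. i < CARD('a) \<Longrightarrow> Re (B $$ (i,i)) \<le> - rho"
    and rho: "rho > 0" and Kb: "\<And>i j. i < CARD('a) \<Longrightarrow> j < CARD('a) \<Longrightarrow> cmod (B $$ (i,j)) \<le> K"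
    and eps: "0 < eps" "eps \<le> 1" "K * eps * CARD('a) \<le> rho / 2"
begin

definition Xv :: "real^'a \<Rightarrow> nat \<Rightarrow> complex" where "Xv x l = complex_of_real (x $ fr l)"
definition zz where "zz x k = mv Q (Xv x) k / complex_of_real (eps ^ k)"
definition Lf :: "real^'a \<Rightarrow> complex^'a" where "Lf x = (\<chi> i. zz x (to i))"

lemma Lf_nth: "k < CARD('a) \<Longrightarrow> Lf x $ fr k = zz x k"
  unfolding Lf_def by simp

lemma lin: "linear Lf"
proof (rule linearI)
  fix x y :: "real^'a"
  have "Xv (x + y) = (\<lambda>l. Xv x l + Xv y l)" unfolding Xv_def by auto
  then show "Lf (x + y) = Lf x + Lf y"
    unfolding Lf_def zz_def by (simp add: Finite_Cartesian_Product.vec_eq_iff mv_add add_divide_distrib)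
next
  fix r :: real and x :: "real^'a"
  have "Xv (r *\<^sub>R x) = (\<lambda>l. complex_of_real r * Xv x l)" unfolding Xv_def by auto
  then have z: "zz (r *\<^sub>R x) k = r *\<^sub>R zz x k" for k
    unfolding zz_def by (simp add: mv_scale scaleR_conv_of_real)
  show "Lf (r *\<^sub>R x) = r *\<^sub>R Lf x"
    unfolding Lf_def by (rule Finite_Cartesian_Product.vec_eq_iff[THEN iffD2]) (simp add: z)
qed

lemma Av: "k < CARD('a) \<Longrightarrow> Xv (A *v x) k = mv (cA A) (Xv x) k"
proof -
  assume k: "k < CARD('a)"
  have "Xv (A *v x) k = (\<Sum>j\<in>UNIV. complex_of_real (A $ fr k $ j) * complex_of_real (x $ j))"
    unfolding Xv_def matrix_vector_mult_def by simp
  also have "\<dots> = (\<Sum>j\<in>UNIV. (\<lambda>l. complex_of_real (A $ fr k $ fr l) * complex_of_real (x $ fr l)) (to j))"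
    by simp
  also have "\<dots> = (\<Sum>l\<in>{0..<CARD('a)}. complex_of_real (A $ fr k $ fr l) * complex_of_real (x $ fr l))"
    by (rule reidx)
  also have "\<dots> = mv (cA A) (Xv x) k"
    unfolding mv_def Xv_def cA_def using k by (intro sum.cong) auto
  finally show ?thesis .
qed

lemma QA: "Q * cA A = B * Q"
proof -
  have "Q * cA A = Q * (P * B * Q)" by (simp add: APBQ)
  also have "\<dots> = Q * (P * (B * Q))" using carr by simp
  also have "\<dots> = (Q * P) * (B * Q)" using carr by (intro assoc_mult_mat[symmetric]) auto
  also have "\<dots> = B * Q" using carr by (simp add: QP)
  finally show ?thesis .
qed

lemma mvQ: "mv Q (Xv x) = (\<lambda>j. complex_of_real (eps ^ j) * zz x j)"
  unfolding zz_def using eps by auto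

lemma zzA: "k < CARD('a) \<Longrightarrow>
   zz (A *v x) k = (\<Sum>j\<in>{0..<CARD('a)}. B $$ (k,j) * complex_of_real (eps ^ j) * zz x j) / complex_of_real (eps ^ k)"
proof -
  assume k: "k < CARD('a)"
  have "mv Q (Xv (A *v x)) k = mv Q (mv (cA A) (Xv x)) k" by (rule mv_cong) (simp add: Av)
  also have "\<dots> = mv (Q * cA A) (Xv x) k" using carr cA_carrier k by (simp add: mv_mult)
  also have "\<dots> = mv (B * Q) (Xv x) k" by (simp add: QA)
  also have "\<dots> = mv B (mv Q (Xv x)) k" using carr k by (simp add: mv_mult)
  also have "\<dots> = (\<Sum>j\<in>{0..<CARD('a)}. B $$ (k,j) * complex_of_real (eps ^ j) * zz x j)"
    unfolding mv_def mvQ by (simp add: mult.assoc)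
  finally show ?thesis unfolding zz_def by simp
qed

lemma xrec: "complex_of_real (x $ i) = (\<Sum>k\<in>{0..<CARD('a)}. P $$ (to i, k) * complex_of_real (eps ^ k) * zz x k)"
proof -
  have ti: "to i < CARD('a)" by (rule to_lt)
  have "complex_of_real (x $ i) = Xv x (to i)" unfolding Xv_def by simp
  also have "\<dots> = mv (1\<^sub>m CARD('a)) (Xv x) (to i)" using ti by (simp add: mv_one)
  also have "\<dots> = mv (P * Q) (Xv x) (to i)" by (simp add: PQ)
  also have "\<dots> = mv P (mv Q (Xv x)) (to i)" using carr ti by (simp add: mv_mult)
  also have "\<dots> = (\<Sum>k\<in>{0..<CARD('a)}. P $$ (to i, k) * complex_of_real (eps ^ k) * zz x k)"
    unfolding mv_def mvQ by (simp add: mult.assoc)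
  finally show ?thesis .
qed

lemma innerL: "inner (Lf x) (Lf y) = (\<Sum>k\<in>{0..<CARD('a)}. inner (zz x k) (zz y k))"
  unfolding inner_vec_def Lf_def using reidx[of "\<lambda>k. inner (zz x k) (zz y k)"] by simp

lemma normL2: "(norm (Lf x))^2 = (\<Sum>k\<in>{0..<CARD('a)}. (cmod (zz x k))^2)"
  using innerL[of x x] by (simp add: dot_square_norm)

lemma zz_le: "k < CARD('a) \<Longrightarrow> cmod (zz x k) \<le> norm (Lf x)"
  using Finite_Cartesian_Product.norm_nth_le[where x="Lf x" and i="fr k"] Lf_nth[of k x] by simp

lemma K0: "K \<ge> 0"
proof -
  have "0 < CARD('a)" by simp
  then show ?thesis using Kb[of 0 0] by (meson norm_ge_zero order_trans)
qed

lemma lower: "\<exists>m>0. \<forall>x. m * norm x \<le> norm (Lf x)"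
proof -
  define Kp where "Kp = (\<Sum>i\<in>{0..<CARD('a)}. \<Sum>k\<in>{0..<CARD('a)}. cmod (P $$ (i,k)))"
  have Kp0: "Kp \<ge> 0" by (simp add: Kp_def sum_nonneg)
  have rowb: "(\<Sum>k\<in>{0..<CARD('a)}. cmod (P $$ (i,k))) \<le> Kp" if "i < CARD('a)" for i
    unfolding Kp_def using that by (intro member_le_sum) (auto intro: sum_nonneg)
  have comp: "\<bar>x $ i\<bar> \<le> Kp * norm (Lf x)" for x :: "real^'a" and i
  proof -
    have "\<bar>x $ i\<bar> = cmod (complex_of_real (x $ i))" by simp
    also have "\<dots> = cmod (\<Sum>k\<in>{0..<CARD('a)}. P $$ (to i, k) * complex_of_real (eps ^ k) * zz x k)"
      by (subst xrec) (rule refl)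
    also have "\<dots> \<le> (\<Sum>k\<in>{0..<CARD('a)}. cmod (P $$ (to i, k) * complex_of_real (eps ^ k) * zz x k))"
      by (rule norm_sum)
    also have "\<dots> \<le> (\<Sum>k\<in>{0..<CARD('a)}. cmod (P $$ (to i, k)) * norm (Lf x))"
    proof (rule sum_mono)
      fix k assume k: "k \<in> {0..<CARD('a)}"
      have e: "eps ^ k \<le> 1" using eps by (simp add: power_le_one)
      have "cmod (P $$ (to i, k) * complex_of_real (eps ^ k) * zz x k) = cmod (P $$ (to i, k)) * (eps ^ k * cmod (zz x k))"
        using eps by (simp add: norm_mult norm_power)
      also have "\<dots> \<le> cmod (P $$ (to i, k)) * (1 * norm (Lf x))"
        using e zz_le[of k x] k eps by (intro mult_left_mono mult_mono) auto
      finally show "cmod (P $$ (to i, k) * complex_of_real (eps ^ k) * zz x k) \<le> cmod (P $$ (to i, k)) * norm (Lf x)"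
        by simp
    qed
    also have "\<dots> = (\<Sum>k\<in>{0..<CARD('a)}. cmod (P $$ (to i, k))) * norm (Lf x)"
      by (simp add: sum_distrib_right)
    also have "\<dots> \<le> Kp * norm (Lf x)" using rowb[OF to_lt] by (intro mult_right_mono) auto
    finally show ?thesis .
  qed
  define m where "m = 1 / (real CARD('a) * Kp + 1)"
  show ?thesis
  proof (intro exI conjI allI)
    have "0 \<le> real CARD('a) * Kp" using Kp0 by simp
    then show "m > 0" unfolding m_def by simp
    fix x :: "real^'a"
    have "norm x \<le> (\<Sum>i\<in>UNIV. \<bar>x $ i\<bar>)" by (rule norm_le_l1_cart)
    also have "\<dots> \<le> (\<Sum>i\<in>(UNIV::'a set). Kp * norm (Lf x))" by (intro sum_mono comp)
    also have "\<dots> = real CARD('a) * Kp * norm (Lf x)" by simp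
    also have "\<dots> \<le> (real CARD('a) * Kp + 1) * norm (Lf x)" by (simp add: distrib_right)
    finally have "norm x \<le> (real CARD('a) * Kp + 1) * norm (Lf x)" .
    moreover have d: "0 < real CARD('a) * Kp + 1" using Kp0 by (simp add: add_nonneg_pos)
    ultimately show "m * norm x \<le> norm (Lf x)" unfolding m_def
      by (simp add: pos_divide_le_eq mult.commute)
  qed
qed

lemma diag_inner: "inner a (b * a) = Re b * (cmod a)^2" for a b :: complex
proof -
  have "(cmod a)^2 = (Re a)^2 + (Im a)^2" by (rule cmod_power2)
  then show ?thesis by (simp add: inner_complex_def power2_eq_square algebra_simps)
qed

lemma dsum: "(\<Sum>k\<in>{0..<CARD('a)}. \<Sum>j\<in>{0..<CARD('a)}. f k * f j) \<le> real CARD('a) * (\<Sum>k\<in>{0..<CARD('a)}. (f k)^2)"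
  for f :: "nat \<Rightarrow> real"
proof -
  have "(\<Sum>k\<in>{0..<CARD('a)}. \<Sum>j\<in>{0..<CARD('a)}. f k * f j) \<le>
     (\<Sum>k\<in>{0..<CARD('a)}. \<Sum>j\<in>{0..<CARD('a)}. ((f k)^2 + (f j)^2) / 2)"
  proof (intro sum_mono)
    fix k j
    have "0 \<le> (f k - f j)^2" by simp
    then show "f k * f j \<le> ((f k)^2 + (f j)^2) / 2" by (simp add: power2_diff)
  qed
  also have "\<dots> = (\<Sum>k\<in>{0..<CARD('a)}. (real CARD('a) * (f k)^2 + (\<Sum>j\<in>{0..<CARD('a)}. (f j)^2)) / 2)"
    by (simp add: sum.distrib sum_divide_distrib[symmetric])
  also have "\<dots> = ((\<Sum>k\<in>{0..<CARD('a)}. real CARD('a) * (f k)^2) + (\<Sum>k\<in>{0..<CARD('a)}. (\<Sum>j\<in>{0..<CARD('a)}. (f j)^2))) / 2"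
    by (simp only: sum_divide_distrib[symmetric] sum.distrib)
  also have "\<dots> = real CARD('a) * (\<Sum>k\<in>{0..<CARD('a)}. (f k)^2)"
    by (simp add: sum_distrib_left[symmetric])
  finally show ?thesis .
qed

lemma key: "inner (Lf x) (Lf (A *v x)) \<le> - (rho/2) * (norm (Lf x))^2"
proof -
  define z where "z = zz x"
  define S where "S = (\<Sum>k\<in>{0..<CARD('a)}. (cmod (z k))^2)"
  have S: "(norm (Lf x))^2 = S" unfolding S_def z_def by (rule normL2)
  have S0: "S \<ge> 0" unfolding S_def by (simp add: sum_nonneg)
  have Ke0: "K * eps \<ge> 0" using K0 eps by simp
  have trm: "inner (z k) (zz (A *v x) k) \<le> Re (B $$ (k,k)) * (cmod (z k))^2 + K * eps * (\<Sum>j\<in>{0..<CARD('a)}. cmod (z k) * cmod (z j))"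
    if k: "k < CARD('a)" for k
  proof -
    define cf where "cf j = B $$ (k,j) * complex_of_real (eps ^ j) / complex_of_real (eps ^ k)" for j
    have zA: "zz (A *v x) k = (\<Sum>j\<in>{0..<CARD('a)}. cf j * z j)"
      unfolding zzA[OF k] cf_def z_def by (simp add: sum_divide_distrib)
    have ck: "cf k = B $$ (k,k)" unfolding cf_def using eps by simp
    have cb: "cmod (cf j) \<le> K * eps" if j: "j < CARD('a)" "j \<noteq> k" for j
    proof (cases "j < k")
      case True
      then have "B $$ (k,j) = 0" using upper k by blast
      then have "cf j = 0" unfolding cf_def by simp
      then show ?thesis using Ke0 by simp
    next
      case False
      then have kj: "k < j" using j by simp
      have "cmod (cf j) = cmod (B $$ (k,j)) * (eps ^ j / eps ^ k)" unfolding cf_def using eps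
        by (simp add: norm_mult norm_divide norm_power)
      also have "eps ^ j / eps ^ k = eps ^ (j - k)" using eps kj by (simp add: power_diff)
      also have "cmod (B $$ (k,j)) * eps ^ (j - k) \<le> K * eps"
      proof (rule mult_mono)
        show "cmod (B $$ (k,j)) \<le> K" using Kb k j by simp
        have "eps ^ (j - k) \<le> eps ^ 1" using eps kj by (intro power_decreasing) auto
        then show "eps ^ (j - k) \<le> eps" by simp
      qed (use K0 eps in auto)
      finally show ?thesis .
    qed
    have "inner (z k) (zz (A *v x) k) = (\<Sum>j\<in>{0..<CARD('a)}. inner (z k) (cf j * z j))"
      unfolding zA by (simp add: inner_sum_right)
    also have "\<dots> \<le> (\<Sum>j\<in>{0..<CARD('a)}. (if j = k then Re (B $$ (k,k)) * (cmod (z k))^2 else 0)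
         + K * eps * (cmod (z k) * cmod (z j)))"
    proof (rule sum_mono)
      fix j assume j: "j \<in> {0..<CARD('a)}"
      show "inner (z k) (cf j * z j) \<le> (if j = k then Re (B $$ (k,k)) * (cmod (z k))^2 else 0)
         + K * eps * (cmod (z k) * cmod (z j))"
      proof (cases "j = k")
        case True
        have "0 \<le> K * eps * (cmod (z k) * cmod (z j))" using Ke0 by simp
        then show ?thesis using True ck diag_inner[of "z k" "B $$ (k,k)"] by simp
      next
        case False
        have "inner (z k) (cf j * z j) \<le> cmod (z k) * cmod (cf j * z j)" by (rule norm_cauchy_schwarz)
        also have "\<dots> = cmod (cf j) * (cmod (z k) * cmod (z j))" by (simp add: norm_mult)
        also have "\<dots> \<le> K * eps * (cmod (z k) * cmod (z j))" using cb[of j] j False by (intro mult_right_mono) auto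
        finally show ?thesis using False by simp
      qed
    qed
    also have "\<dots> = Re (B $$ (k,k)) * (cmod (z k))^2 + K * eps * (\<Sum>j\<in>{0..<CARD('a)}. cmod (z k) * cmod (z j))"
      using k by (simp add: sum.distrib sum_distrib_left)
    finally show ?thesis .
  qed
  have "inner (Lf x) (Lf (A *v x)) = (\<Sum>k\<in>{0..<CARD('a)}. inner (z k) (zz (A *v x) k))"
    unfolding z_def by (rule innerL)
  also have "\<dots> \<le> (\<Sum>k\<in>{0..<CARD('a)}. Re (B $$ (k,k)) * (cmod (z k))^2 + K * eps * (\<Sum>j\<in>{0..<CARD('a)}. cmod (z k) * cmod (z j)))"
    by (rule sum_mono) (rule trm, simp)
  also have "\<dots> = (\<Sum>k\<in>{0..<CARD('a)}. Re (B $$ (k,k)) * (cmod (z k))^2) + K * eps * (\<Sum>k\<in>{0..<CARD('a)}. \<Sum>j\<in>{0..<CARD('a)}. cmod (z k) * cmod (z j))"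
    by (simp add: sum.distrib sum_distrib_left)
  also have "\<dots> \<le> - rho * S + K * eps * (real CARD('a) * S)"
  proof (rule add_mono)
    show "(\<Sum>k\<in>{0..<CARD('a)}. Re (B $$ (k,k)) * (cmod (z k))^2) \<le> - rho * S"
      unfolding S_def sum_distrib_left
    proof (rule sum_mono)
      fix k assume "k \<in> {0..<CARD('a)}"
      then have "Re (B $$ (k,k)) * (cmod (z k))^2 \<le> (- rho) * (cmod (z k))^2"
        using diag by (intro mult_right_mono) auto
      then show "Re (B $$ (k,k)) * (cmod (z k))^2 \<le> - rho * (cmod (z k))^2" by simp
    qed
    show "K * eps * (\<Sum>k\<in>{0..<CARD('a)}. \<Sum>j\<in>{0..<CARD('a)}. cmod (z k) * cmod (z j)) \<le> K * eps * (real CARD('a) * S)"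
      unfolding S_def using Ke0 dsum[of "\<lambda>k. cmod (z k)"] by (intro mult_left_mono) auto
  qed
  also have "\<dots> \<le> - (rho/2) * S"
  proof -
    have "K * eps * (real CARD('a) * S) = (K * eps * real CARD('a)) * S" by simp
    also have "\<dots> \<le> (rho/2) * S" using eps(3) S0 by (intro mult_right_mono) auto
    finally show ?thesis by simp
  qed
  finally show ?thesis using S by simp
qed

end

lemma (in idx) lyap_idx:
  fixes A :: "real^'n^'n"
  assumes neg: "\<forall>l\<in>mspectrum A. Re l < 0"
  shows "\<exists>L::real^'n \<Rightarrow> complex^'n. linear L \<and> (\<exists>m>0. \<forall>v. m * norm v \<le> norm (L v)) \<and>
           (\<exists>c>0. \<forall>v. inner (L v) (L (A *v v)) \<le> - c * (norm (L v))^2)"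
proof -
  obtain es where cp: "char_poly (cA A) = (\<Prod>a\<leftarrow>es. [:- a, 1:])"
    using char_poly_factorized[OF cA_carrier] by blast
  obtain B P Q where sd: "schur_decomposition (cA A) es = (B,P,Q)" by (metis prod_cases3)
  from schur_decomposition[OF cA_carrier cp sd]
  have sim: "similar_mat_wit (cA A) B P Q" and ut: "upper_triangular B" and dg: "diag_mat B = es" by auto
  have dimA: "dim_row (cA A) = CARD('n)" unfolding cA_def by simp
  from sim have carrB: "B \<in> carrier_mat CARD('n) CARD('n)" and carrP: "P \<in> carrier_mat CARD('n) CARD('n)"
    and carrQ: "Q \<in> carrier_mat CARD('n) CARD('n)" and PQ: "P * Q = 1\<^sub>m CARD('n)" and QP: "Q * P = 1\<^sub>m CARD('n)"
    and APBQ: "cA A = P * B * Q"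
    unfolding similar_mat_wit_def Let_def dimA by auto
  have upper: "B $$ (i,j) = 0" if "j < i" "i < CARD('n)" for i j
    using ut that carrB unfolding upper_triangular_def by auto
  have dneg: "Re (B $$ (i,i)) < 0" if i: "i < CARD('n)" for i
  proof -
    have mem: "B $$ (i,i) \<in> set es" unfolding dg[symmetric] diag_mat_def using i carrB by auto
    have "poly (char_poly (cA A)) (B $$ (i,i)) = 0"
      unfolding cp poly_prod_list prod_list_zero_iff using mem by (auto simp: o_def)
    then have "B $$ (i,i) \<in> mspectrum A" by (rule spec)
    then show ?thesis using neg by blast
  qed
  define rho where "rho = Min ((\<lambda>i. - Re (B $$ (i,i))) ` {0..<CARD('n)})"
  have fin: "finite ((\<lambda>i. - Re (B $$ (i,i))) ` {0..<CARD('n)})" by simp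
  have ne: "(\<lambda>i. - Re (B $$ (i,i))) ` {0..<CARD('n)} \<noteq> {}" by simp
  have rho0: "rho > 0"
  proof -
    have "rho \<in> (\<lambda>i. - Re (B $$ (i,i))) ` {0..<CARD('n)}" unfolding rho_def by (rule Min_in[OF fin ne])
    then obtain i where "i < CARD('n)" "rho = - Re (B $$ (i,i))" by auto
    then show ?thesis using dneg by simp
  qed
  have diag: "Re (B $$ (i,i)) \<le> - rho" if "i < CARD('n)" for i
  proof -
    have "rho \<le> - Re (B $$ (i,i))" unfolding rho_def using fin that by (intro Min_le) auto
    then show ?thesis by simp
  qed
  define K where "K = (\<Sum>i\<in>{0..<CARD('n)}. \<Sum>j\<in>{0..<CARD('n)}. cmod (B $$ (i,j)))"
  have Kb: "cmod (B $$ (i,j)) \<le> K" if "i < CARD('n)" "j < CARD('n)" for i j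
  proof -
    have "cmod (B $$ (i,j)) \<le> (\<Sum>j\<in>{0..<CARD('n)}. cmod (B $$ (i,j)))"
      using that by (intro member_le_sum) auto
    also have "\<dots> \<le> K" unfolding K_def using that by (intro member_le_sum) (auto intro: sum_nonneg)
    finally show ?thesis .
  qed
  have K0: "K \<ge> 0" unfolding K_def by (simp add: sum_nonneg)
  define eps where "eps = min 1 (rho / (2 * (K * CARD('n) + 1)))"
  have KN0: "K * CARD('n) \<ge> 0" using K0 by simp
  have eps0: "eps > 0" unfolding eps_def using rho0 KN0 by (simp add: add_nonneg_pos)
  have eps1: "eps \<le> 1" unfolding eps_def by simp
  have eps2: "K * eps * CARD('n) \<le> rho / 2"
  proof -
    have "eps \<le> rho / (2 * (K * CARD('n) + 1))" unfolding eps_def by simp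
    then have "(K * CARD('n)) * eps \<le> (K * CARD('n)) * (rho / (2 * (K * CARD('n) + 1)))"
      using KN0 by (rule mult_left_mono)
    also have "\<dots> = rho / 2 * ((K * CARD('n)) / (K * CARD('n) + 1))" by (simp add: field_simps)
    also have "\<dots> \<le> rho / 2 * 1" using rho0 KN0 by (intro mult_left_mono) auto
    finally show ?thesis by (simp add: algebra_simps)
  qed
  interpret S: sdata to A B P Q eps rho K
    by (rule sdata.intro[OF idx_axioms], unfold_locales)
       (use carrB carrP carrQ PQ QP APBQ upper diag rho0 Kb eps0 eps1 eps2 in auto)
  show ?thesis
  proof (rule exI[of _ S.Lf], intro conjI)
    show "linear S.Lf" by (rule S.lin)
    show "\<exists>m>0. \<forall>v. m * norm v \<le> norm (S.Lf v)" by (rule S.lower)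
    show "\<exists>c>0. \<forall>v. inner (S.Lf v) (S.Lf (A *v v)) \<le> - c * (norm (S.Lf v))^2"
      using S.key rho0 by (intro exI[of _ "rho/2"]) auto
  qed
qed




locale bilsys =
  fixes A :: "real^'n^'n" and L :: "real^'n \<Rightarrow> 'b::real_inner"
    and x p :: "real \<Rightarrow> real^'n" and om :: "real \<Rightarrow> real"
    and a b c m M :: real
  assumes linL: "linear L"
  and Lup: "\<And>v. norm (L v) \<le> M * norm v"
  and Llow: "\<And>v. m * norm v \<le> norm (L v)"
  and mpos: "m > 0" and Mpos: "M > 0" and cpos: "c > 0" and a0: "a \<ge> 0" and b0: "b \<ge> 0"
  and LA: "\<And>v. inner (L v) (L (A *v v)) \<le> - c * (norm (L v))^2"
  and Ab: "\<And>v. norm (A *v v) \<le> a * norm v"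
  and pb: "\<And>r. r \<ge> 0 \<Longrightarrow> norm (p r) \<le> b * om r * norm (x r)"
  and om0: "\<And>r. om r \<ge> 0"
  and sol: "\<And>t. t \<ge> 0 \<Longrightarrow> ((\<lambda>r. A *v x r + p r) has_integral (x t - x 0)) {0..t}"
  and omi: "\<And>s t. 0 \<le> s \<Longrightarrow> om integrable_on {s..t}"
  and om2i: "\<And>s t. 0 \<le> s \<Longrightarrow> (\<lambda>r. (om r)^2) integrable_on {s..t}"
begin

definition g where "g r = A *v x r + p r"

lemma g_int: "0 \<le> t \<Longrightarrow> g integrable_on {0..t}"
  using sol unfolding g_def integrable_on_def by blast

lemma incr:
  assumes "0 \<le> s0" "s0 \<le> r"
  shows "(g has_integral (x r - x s0)) {s0..r}"
proof -
  have gi: "g integrable_on {0..r}" using assms g_int by simp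
  have "integral {0..s0} g + integral {s0..r} g = integral {0..r} g"
    using Henstock_Kurzweil_Integration.integral_combine[OF assms gi] .
  moreover have "integral {0..r} g = x r - x 0" "integral {0..s0} g = x s0 - x 0"
    using sol[of r] sol[of s0] assms unfolding g_def by (auto intro: integral_unique)
  moreover have "g integrable_on {s0..r}"
    using integrable_subinterval_real[OF gi] assms by auto
  ultimately have "integral {s0..r} g = x r - x s0" "g integrable_on {s0..r}"
    by (simp_all add: algebra_simps)
  then show ?thesis
    using has_integral_integrable_integral by (simp add: has_integral_integrable_integral)
qed

lemma xcont: "continuous_on {0..T} x"
proof (cases "0 \<le> T")
  case False then show ?thesis by simp
next
  case True
  have "continuous_on {0..T} (\<lambda>t. x 0 + integral {0..t} g)"
    by (intro continuous_intros indefinite_integral_continuous_1 g_int) (use True in auto)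
  moreover have "\<And>t. t \<in> {0..T} \<Longrightarrow> x 0 + integral {0..t} g = x t"
  proof -
    fix t assume "t \<in> {0..T}"
    then have "integral {0..t} g = x t - x 0" using sol unfolding g_def by (auto intro: integral_unique)
    then show "x 0 + integral {0..t} g = x t" by simp
  qed
  ultimately show ?thesis by (rule continuous_on_eq)
qed

lemma gbound: "r \<ge> 0 \<Longrightarrow> norm (g r) \<le> (a + b * om r) * norm (x r)"
proof -
  assume r: "r \<ge> 0"
  have "norm (g r) \<le> norm (A *v x r) + norm (p r)" unfolding g_def by (rule norm_triangle_ineq)
  also have "\<dots> \<le> a * norm (x r) + b * om r * norm (x r)" using Ab pb[OF r] by (intro add_mono) auto
  finally show ?thesis by (simp add: algebra_simps)
qed

lemma affint:
  assumes "0 \<le> s0"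
  shows "(\<lambda>q. \<alpha> + \<beta> * om q) integrable_on {s0..s}"
    "s0 \<le> s \<Longrightarrow> integral {s0..s} (\<lambda>q. \<alpha> + \<beta> * om q) = \<alpha> * (s - s0) + \<beta> * integral {s0..s} om"
proof -
  have i1: "(\<lambda>q. \<beta> * om q) integrable_on {s0..s}" using integrable_cmul[OF omi[OF assms(1)], of \<beta> s] by simp
  show "(\<lambda>q. \<alpha> + \<beta> * om q) integrable_on {s0..s}" by (rule integrable_add[OF integrable_const_ivl i1])
  show "s0 \<le> s \<Longrightarrow> integral {s0..s} (\<lambda>q. \<alpha> + \<beta> * om q) = \<alpha> * (s - s0) + \<beta> * integral {s0..s} om"
    by (simp add: integral_add[OF integrable_const_ivl i1] integral_mult[OF omi[OF assms(1)], symmetric])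
qed

lemma om_int_nonneg: "integral {s0..s} om \<ge> 0"
  by (metis integral_nonneg not_integrable_integral om0 order_refl)

lemma locbound:
  assumes s0: "0 \<le> s0" "s0 \<le> s" and th: "a * (s - s0) + b * integral {s0..s} om \<le> 1/2"
  shows "\<forall>r\<in>{s0..s}. norm (x r) \<le> 2 * norm (x s0) \<and>
     norm (x r - x s0) \<le> 2 * (a * (s - s0) + b * integral {s0..s} om) * norm (x s0)"
proof -
  define \<theta> where "\<theta> = a * (s - s0) + b * integral {s0..s} om"
  have th0: "\<theta> \<ge> 0" unfolding \<theta>_def using a0 b0 s0 om_int_nonneg by (intro add_nonneg_nonneg mult_nonneg_nonneg) auto
  have "continuous_on {s0..s} x" using xcont[of s] by (rule continuous_on_subset) (use s0 in auto)
  then have "continuous_on {s0..s} (\<lambda>r. norm (x r))" by (intro continuous_intros)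
  then obtain rm where rm: "rm \<in> {s0..s}" and rmax: "\<And>r. r \<in> {s0..s} \<Longrightarrow> norm (x r) \<le> norm (x rm)"
    using continuous_attains_sup[of "{s0..s}" "\<lambda>r. norm (x r)"] s0 by auto
  define X where "X = norm (x rm)"
  have X0: "X \<ge> 0" unfolding X_def by simp
  have key: "norm (x r - x s0) \<le> \<theta> * X" if r: "r \<in> {s0..s}" for r
  proof -
    have "x r - x s0 = integral {s0..r} g" using incr[of s0 r] s0 r by (auto intro: integral_unique[symmetric])
    also have "norm \<dots> \<le> integral {s0..r} (\<lambda>q. (a * X) + (b * X) * om q)"
    proof (rule integral_norm_bound_integral)
      show "g integrable_on {s0..r}" using incr[of s0 r] s0 r by auto
      show "(\<lambda>q. (a * X) + (b * X) * om q) integrable_on {s0..r}" by (rule affint(1)[OF s0(1)])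
      fix q assume q: "q \<in> {s0..r}"
      have "norm (g q) \<le> (a + b * om q) * norm (x q)" using gbound[of q] q s0 by auto
      also have "\<dots> \<le> (a + b * om q) * X" unfolding X_def
        using rmax[of q] q r a0 b0 om0[of q] by (intro mult_left_mono) auto
      finally show "norm (g q) \<le> (a * X) + (b * X) * om q" by (simp add: algebra_simps)
    qed
    also have "\<dots> \<le> integral {s0..s} (\<lambda>q. (a * X) + (b * X) * om q)"
      using r s0 a0 b0 X0 om0 by (intro integral_subset_le affint(1)) auto
    also have "\<dots> = \<theta> * X" using affint(2)[OF s0(1) s0(2), of "a*X" "b*X"] by (simp add: \<theta>_def algebra_simps)
    finally show ?thesis .
  qed
  have "X \<le> norm (x s0) + norm (x rm - x s0)" unfolding X_def by (metis add.commute diff_add_cancel norm_triangle_ineq)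
  also have "\<dots> \<le> norm (x s0) + \<theta> * X" using key[OF rm] by simp
  finally have "X \<le> norm (x s0) + \<theta> * X" .
  moreover have "\<theta> * X \<le> 1/2 * X" using th X0 unfolding \<theta>_def[symmetric] by (rule mult_right_mono)
  ultimately have X2: "X \<le> 2 * norm (x s0)" by linarith
  show ?thesis
  proof
    fix r assume r: "r \<in> {s0..s}"
    have "norm (x r) \<le> 2 * norm (x s0)" using rmax[OF r] X2 unfolding X_def by simp
    moreover have "norm (x r - x s0) \<le> 2 * \<theta> * norm (x s0)"
    proof -
      have "\<theta> * X \<le> \<theta> * (2 * norm (x s0))" using X2 th0 by (rule mult_left_mono)
      then show ?thesis using key[OF r] by simp
    qed
    ultimately show "norm (x r) \<le> 2 * norm (x s0) \<and>
     norm (x r - x s0) \<le> 2 * (a * (s - s0) + b * integral {s0..s} om) * norm (x s0)" unfolding \<theta>_def by simp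
  qed
qed

lemma blL: "bounded_linear L" using linL by (simp add: linear_conv_bounded_linear)

lemma Vstep:
  assumes s0: "0 \<le> s0" "s0 \<le> s"
    and th: "a * (s - s0) + b * integral {s0..s} om \<le> 1/2"
  shows "(norm (L (x s)))^2 \<le> (norm (L (x s0)))^2 * (1 - 2*c*(s-s0)) + (norm (x s0))^2 *
     (4*M^2*a*(a * (s - s0) + b * integral {s0..s} om)*(s-s0) + 4*M^2*b*integral {s0..s} om
      + 4*M^2*(a * (s - s0) + b * integral {s0..s} om)^2)"
proof -
  define \<theta> where "\<theta> = a * (s - s0) + b * integral {s0..s} om"
  define W where "W = integral {s0..s} om"
  define y0 where "y0 = x s0"
  define d where "d = x s - y0"
  define n0 where "n0 = norm y0"
  define V0 where "V0 = (norm (L y0))^2"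
  have lb: "\<forall>r\<in>{s0..s}. norm (x r) \<le> 2 * n0 \<and> norm (x r - y0) \<le> 2 * \<theta> * n0"
    using locbound[OF s0 th] unfolding \<theta>_def y0_def n0_def by simp
  have n00: "n0 \<ge> 0" unfolding n0_def by simp
  have th0: "\<theta> \<ge> 0" unfolding \<theta>_def using a0 b0 s0 om_int_nonneg by (intro add_nonneg_nonneg mult_nonneg_nonneg) auto
  have Lxs: "L (x s) = L y0 + L d" unfolding d_def using linear_add[OF linL, of y0 "x s - y0"] by simp
  have exp: "(norm (L (x s)))^2 = V0 + 2 * inner (L y0) (L d) + (norm (L d))^2"
    unfolding Lxs V0_def by (simp add: power2_norm_eq_inner inner_add_left inner_add_right inner_commute)
  define \<phi> where "\<phi> v = inner (L y0) (L v)" for v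
  have blphi: "bounded_linear \<phi>" unfolding \<phi>_def
    by (rule bounded_linear_compose[OF bounded_linear_inner_right blL])
  have gi: "g integrable_on {s0..s}" and gint: "integral {s0..s} g = d"
    using incr[OF s0] unfolding d_def y0_def by (auto intro: integral_unique)
  have "inner (L y0) (L d) = integral {s0..s} (\<phi> \<circ> g)"
    using integral_linear[OF gi blphi] gint unfolding \<phi>_def by simp
  also have "\<dots> \<le> integral {s0..s} (\<lambda>q. (- c * V0 + 2*M^2*a*\<theta>*n0^2) + (2*M^2*b*n0^2) * om q)"
  proof (rule integral_le)
    show "(\<phi> \<circ> g) integrable_on {s0..s}" by (rule integrable_linear[OF gi blphi])
    show "(\<lambda>q. (- c * V0 + 2*M^2*a*\<theta>*n0^2) + (2*M^2*b*n0^2) * om q) integrable_on {s0..s}"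
      by (rule affint(1)[OF s0(1)])
    fix q assume q: "q \<in> {s0..s}"
    then have q0: "q \<ge> 0" using s0 by auto
    have xq: "norm (x q) \<le> 2 * n0" "norm (x q - y0) \<le> 2 * \<theta> * n0" using lb q by auto
    have gq: "L (g q) = L (A *v y0) + L (A *v (x q - y0)) + L (p q)"
      unfolding g_def by (simp add: linear_add[OF linL, symmetric] matrix_vector_right_distrib[symmetric])
    have t1: "inner (L y0) (L (A *v y0)) \<le> - c * V0" unfolding V0_def by (rule LA)
    have "inner (L y0) (L (A *v (x q - y0))) \<le> norm (L y0) * norm (L (A *v (x q - y0)))"
      by (rule norm_cauchy_schwarz)
    also have "\<dots> \<le> (M * n0) * (M * (a * (2 * \<theta> * n0)))"
    proof (rule mult_mono)
      show "norm (L y0) \<le> M * n0" unfolding n0_def by (rule Lup)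
      have "norm (L (A *v (x q - y0))) \<le> M * norm (A *v (x q - y0))" by (rule Lup)
      also have "\<dots> \<le> M * (a * norm (x q - y0))" using Ab Mpos by (intro mult_left_mono) auto
      also have "\<dots> \<le> M * (a * (2 * \<theta> * n0))" using xq(2) Mpos a0 by (intro mult_left_mono) auto
      finally show "norm (L (A *v (x q - y0))) \<le> M * (a * (2 * \<theta> * n0))" .
    qed (use Mpos n00 in auto)
    finally have t2: "inner (L y0) (L (A *v (x q - y0))) \<le> 2*M^2*a*\<theta>*n0^2" by (simp add: power2_eq_square algebra_simps)
    have "inner (L y0) (L (p q)) \<le> norm (L y0) * norm (L (p q))"
      by (rule norm_cauchy_schwarz)
    also have "\<dots> \<le> (M * n0) * (M * (b * om q * (2 * n0)))"
    proof (rule mult_mono)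
      show "norm (L y0) \<le> M * n0" unfolding n0_def by (rule Lup)
      have "norm (L (p q)) \<le> M * norm (p q)" by (rule Lup)
      also have "\<dots> \<le> M * (b * om q * norm (x q))" using pb[OF q0] Mpos by (intro mult_left_mono) auto
      also have "\<dots> \<le> M * (b * om q * (2 * n0))" using xq(1) Mpos b0 om0[of q]
        by (intro mult_left_mono) auto
      finally show "norm (L (p q)) \<le> M * (b * om q * (2 * n0))" .
    qed (use Mpos n00 in auto)
    finally have t3: "inner (L y0) (L (p q)) \<le> 2*M^2*b*n0^2 * om q" by (simp add: power2_eq_square algebra_simps)
    show "(\<phi> \<circ> g) q \<le> (- c * V0 + 2*M^2*a*\<theta>*n0^2) + (2*M^2*b*n0^2) * om q"
      using t1 t2 t3 unfolding o_def \<phi>_def gq by (simp add: inner_add_right)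
  qed
  also have "\<dots> = (- c * V0 + 2*M^2*a*\<theta>*n0^2) * (s - s0) + (2*M^2*b*n0^2) * W"
    unfolding W_def by (rule affint(2)[OF s0])
  finally have I1: "inner (L y0) (L d) \<le> (- c * V0 + 2*M^2*a*\<theta>*n0^2) * (s - s0) + (2*M^2*b*n0^2) * W" .
  have "norm (L d) \<le> M * norm d" by (rule Lup)
  also have "\<dots> \<le> M * (2 * \<theta> * n0)" using lb s0 Mpos unfolding d_def by (intro mult_left_mono) auto
  finally have "(norm (L d))^2 \<le> (M * (2 * \<theta> * n0))^2" by (intro power_mono) auto
  then have I2: "(norm (L d))^2 \<le> 4*M^2*\<theta>^2*n0^2" by (simp add: power_mult_distrib)
  have "(norm (L (x s)))^2 \<le> V0 + 2 * ((- c * V0 + 2*M^2*a*\<theta>*n0^2) * (s - s0) + (2*M^2*b*n0^2) * W)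
      + 4*M^2*\<theta>^2*n0^2" unfolding exp
    by (rule add_mono[OF add_mono[OF order_refl mult_left_mono[OF I1]] I2]) simp
  then have "(norm (L (x s)))^2 \<le> V0 * (1 - 2*c*(s-s0)) + n0^2 *
     (4*M^2*a*\<theta>*(s-s0) + 4*M^2*b*W + 4*M^2*\<theta>^2)"
    by (simp add: algebra_simps)
  then show ?thesis unfolding \<theta>_def W_def V0_def n0_def y0_def .
qed

definition "CC = 4 * M^2 / m^2"
definition "C1 = 3 * CC * a^2"
definition "C2 = CC * (a*b + b + 2*b^2)"
definition "eps = c / (2 * (C2 + 1))"
definition "k4 = 1 / (4 * eps)"
definition "kap = (C2 + 1) * k4"
definition "del0 = c / (2 * (C1 + 1))"
definition "eta = min (min 1 del0) (1 / (4 * (a + b + 1)))"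

lemma consts_pos: "CC > 0" "C1 \<ge> 0" "C2 \<ge> 0" "eps > 0" "kap > 0" "del0 > 0" "eta > 0"
proof -
  show c0: "CC > 0" unfolding CC_def using mpos Mpos by simp
  show c1: "C1 \<ge> 0" unfolding C1_def using c0 by simp
  show c2: "C2 \<ge> 0" unfolding C2_def using c0 a0 b0 by simp
  show e: "eps > 0" unfolding eps_def using c2 cpos by simp
  show "kap > 0" unfolding kap_def k4_def using c2 e by simp
  show d: "del0 > 0" unfolding del0_def using c1 cpos by simp
  show "eta > 0" unfolding eta_def using d a0 b0 by simp
qed

lemma om_le: "om q \<le> eps + k4 * (om q)^2"
proof -
  have e: "eps > 0" by (rule consts_pos)
  have k: "k4 = 1 / (4 * eps)" by (simp add: k4_def)
  have "4 * eps * om q \<le> 4 * eps * eps + (om q)^2"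
    using sum_squares_ge_zero[of "om q - 2 * eps" 0] by (simp add: power2_eq_square algebra_simps)
  then have "4 * eps * om q \<le> 4 * eps * (eps + k4 * (om q)^2)"
    using e unfolding k by (simp add: algebra_simps)
  then show ?thesis using e by simp
qed

lemma W_le:
  assumes "0 \<le> s0" and ss: "s0 \<le> s"
  shows "integral {s0..s} om \<le> eps * (s - s0) + k4 * integral {s0..s} (\<lambda>q. (om q)^2)"
proof (cases "s0 \<le> s")
  case True
  have i2: "(\<lambda>q. k4 * (om q)^2) integrable_on {s0..s}"
    using integrable_cmul[OF om2i[OF assms(1)], of k4 s] by simp
  have "integral {s0..s} om \<le> integral {s0..s} (\<lambda>q. eps + k4 * (om q)^2)"
    using om_le by (intro integral_le omi[OF assms(1)] integrable_add[OF integrable_const_ivl i2]) auto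
  also have "\<dots> = integral {s0..s} (\<lambda>q. eps) + integral {s0..s} (\<lambda>q. k4 * (om q)^2)"
    by (rule integral_add[OF integrable_const_ivl i2])
  also have "\<dots> = eps * (s - s0) + k4 * integral {s0..s} (\<lambda>q. (om q)^2)"
    using True integral_mult[OF om2i[OF assms(1)], of k4 s] by simp
  finally show ?thesis .
next
  case False
  then show ?thesis using ss by simp
qed

lemma Vstep2:
  assumes s0: "0 \<le> s0" "s0 \<le> s" and h: "s - s0 \<le> eta" and Wh: "integral {s0..s} om \<le> eta"
  shows "(norm (L (x s)))^2 \<le> (norm (L (x s0)))^2 * exp (- c * (s - s0) + kap * integral {s0..s} (\<lambda>q. (om q)^2))"
proof -
  define h where "h = s - s0"
  define W where "W = integral {s0..s} om"
  define Om where "Om = integral {s0..s} (\<lambda>q. (om q)^2)"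
  define \<theta> where "\<theta> = a * h + b * W"
  define V0 where "V0 = (norm (L (x s0)))^2"
  define n0 where "n0 = norm (x s0)"
  have h0: "h \<ge> 0" unfolding h_def using s0 by simp
  have W0: "W \<ge> 0" unfolding W_def by (rule om_int_nonneg)
  have Om0: "Om \<ge> 0" unfolding Om_def by (metis integral_nonneg not_integrable_integral zero_le_power2 order_refl)
  have eta1: "eta \<le> 1" "eta \<le> del0" "eta \<le> 1 / (4 * (a + b + 1))" unfolding eta_def by auto
  have h1: "h \<le> 1" "h \<le> del0" using h eta1 unfolding h_def by auto
  have W1: "W \<le> 1" using Wh eta1 unfolding W_def by auto
  have "\<theta> \<le> (a + b) * eta" unfolding \<theta>_def using h Wh a0 b0 unfolding h_def W_def
    by (simp add: distrib_right add_mono mult_left_mono)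
  also have "\<dots> \<le> (a + b) * (1 / (4 * (a + b + 1)))" using eta1(3) a0 b0 by (intro mult_left_mono) auto
  also have "\<dots> \<le> 1/2" using a0 b0 by (simp add: field_simps)
  finally have th: "\<theta> \<le> 1/2" .
  have th0: "\<theta> \<ge> 0" unfolding \<theta>_def using a0 b0 h0 W0 by simp
  have VS: "(norm (L (x s)))^2 \<le> V0 * (1 - 2*c*h) + n0^2 * (4*M^2*a*\<theta>*h + 4*M^2*b*W + 4*M^2*\<theta>^2)"
    using Vstep[OF s0] th unfolding \<theta>_def h_def W_def V0_def n0_def by simp
  have "m * n0 \<le> norm (L (x s0))" unfolding n0_def by (rule Llow)
  then have "(m * n0)^2 \<le> V0" unfolding V0_def using mpos by (intro power_mono) (auto simp: n0_def)
  then have n0V: "n0^2 \<le> V0 / m^2" using mpos by (simp add: field_simps power_mult_distrib)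
  have E0: "4*M^2*a*\<theta>*h + 4*M^2*b*W + 4*M^2*\<theta>^2 \<ge> 0" using a0 b0 th0 h0 W0 by simp
  have "n0^2 * (4*M^2*a*\<theta>*h + 4*M^2*b*W + 4*M^2*\<theta>^2) \<le> V0 / m^2 * (4*M^2*a*\<theta>*h + 4*M^2*b*W + 4*M^2*\<theta>^2)"
    using n0V E0 by (rule mult_right_mono)
  also have "\<dots> = V0 * (CC * (a*\<theta>*h + b*W + \<theta>^2))" unfolding CC_def by (simp add: field_simps)
  finally have E1: "n0^2 * (4*M^2*a*\<theta>*h + 4*M^2*b*W + 4*M^2*\<theta>^2) \<le> V0 * (CC * (a*\<theta>*h + b*W + \<theta>^2))" .
  have "a*\<theta>*h \<le> a^2*h^2 + a*b*W"
  proof -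
    have "a*\<theta>*h = a^2*h^2 + a*b*W*h" unfolding \<theta>_def by (simp add: power2_eq_square algebra_simps)
    moreover have "a*b*W*h \<le> a*b*W" using h1(1) a0 b0 W0 by (simp add: mult_left_le)
    ultimately show ?thesis using norm_ge_zero[of "w r"] by linarith
  qed
  moreover have "\<theta>^2 \<le> 2*a^2*h^2 + 2*b^2*W"
  proof -
    have "\<theta>^2 \<le> 2*(a*h)^2 + 2*(b*W)^2" unfolding \<theta>_def
      using sum_squares_ge_zero[of "a*h - b*W" 0] by (simp add: power2_eq_square algebra_simps)
    moreover have "(b*W)^2 \<le> b^2 * W"
    proof -
      have "W*W \<le> W" using W0 W1 by (simp add: mult_left_le)
      then have "(b*b)*(W*W) \<le> (b*b)*W" by (rule mult_left_mono) simp
      then show ?thesis by (simp add: power2_eq_square algebra_simps)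
    qed
    ultimately show ?thesis by (simp add: power_mult_distrib)
  qed
  ultimately have "a*\<theta>*h + b*W + \<theta>^2 \<le> 3*a^2*h^2 + (a*b + b + 2*b^2)*W" by (simp add: algebra_simps)
  then have "CC * (a*\<theta>*h + b*W + \<theta>^2) \<le> CC * (3*a^2*h^2 + (a*b + b + 2*b^2)*W)"
    using consts_pos(1) by (intro mult_left_mono) auto
  then have E2: "CC * (a*\<theta>*h + b*W + \<theta>^2) \<le> C1 * h^2 + C2 * W"
    unfolding C1_def C2_def by (simp add: algebra_simps)
  have "C1 * h^2 \<le> C1 * (del0 * h)" using h1(2) h0 consts_pos(2)
    by (intro mult_left_mono) (auto simp: power2_eq_square mult_right_mono)
  also have "\<dots> = (C1 * del0) * h" by simp
  also have "\<dots> \<le> (c/2) * h"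
  proof (rule mult_right_mono[OF _ h0])
    have "C1 * del0 = c/2 * (C1 / (C1 + 1))" unfolding del0_def using consts_pos(2) by (simp add: field_simps)
    also have "\<dots> \<le> c/2 * 1" using consts_pos(2) cpos by (intro mult_left_mono) auto
    finally show "C1 * del0 \<le> c/2" by simp
  qed
  finally have E3: "C1 * h^2 \<le> (c/2) * h" .
  have "C2 * W \<le> C2 * (eps * h + k4 * Om)"
    using W_le[OF s0] consts_pos(3) unfolding W_def h_def Om_def by (intro mult_left_mono) auto
  also have "\<dots> = (C2 * eps) * h + (C2 * k4) * Om" by (simp add: algebra_simps)
  also have "\<dots> \<le> (c/2) * h + kap * Om"
  proof (rule add_mono)
    have "C2 * eps = c/2 * (C2 / (C2 + 1))" unfolding eps_def using consts_pos(3) by (simp add: field_simps)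
    also have "\<dots> \<le> c/2 * 1" using consts_pos(3) cpos by (intro mult_left_mono) auto
    finally show "(C2 * eps) * h \<le> (c/2) * h" using h0 by (intro mult_right_mono) auto
    have "k4 \<ge> 0" unfolding k4_def using consts_pos(4) by simp
    then show "(C2 * k4) * Om \<le> kap * Om" unfolding kap_def using Om0
      by (intro mult_right_mono) auto
  qed
  finally have E4: "C2 * W \<le> (c/2) * h + kap * Om" .
  have V00: "V0 \<ge> 0" unfolding V0_def by simp
  have "CC * (a*\<theta>*h + b*W + \<theta>^2) \<le> c * h + kap * Om" using E2 E3 E4 by linarith
  then have "V0 * (CC * (a*\<theta>*h + b*W + \<theta>^2)) \<le> V0 * (c * h + kap * Om)" using V00 by (rule mult_left_mono)
  then have "(norm (L (x s)))^2 \<le> V0 * (1 + (- c * h + kap * Om))" using VS E1 by (simp add: algebra_simps)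
  also have "\<dots> \<le> V0 * exp (- c * h + kap * Om)" using V00 by (intro mult_left_mono) (auto simp: exp_ge_add_one_self add.commute)
  finally show ?thesis unfolding V0_def h_def Om_def .
qed

definition "G s = integral {0..s} (\<lambda>q. (om q)^2)"

lemma chain:
  assumes t0: "0 \<le> t"
  shows "(norm (L (x t)))^2 \<le> (norm (L (x 0)))^2 * exp (- c * t + kap * G t)"
proof -
  define P where "P r = integral {0..r} om" for r
  have "continuous_on {0..t} P" unfolding P_def by (rule indefinite_integral_continuous_1[OF omi]) simp
  then have "uniformly_continuous_on {0..t} P" by (intro compact_uniformly_continuous) auto
  then obtain d1 where d1: "d1 > 0" and d1P: "\<And>r r'. r \<in> {0..t} \<Longrightarrow> r' \<in> {0..t} \<Longrightarrow> dist r' r < d1 \<Longrightarrow> dist (P r') (P r) < eta"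
    unfolding uniformly_continuous_on_def using consts_pos(7) by metis
  define \<Delta> where "\<Delta> = min d1 eta / 2"
  have D0: "\<Delta> > 0" unfolding \<Delta>_def using d1 consts_pos(7) by simp
  have Dd: "\<Delta> < d1" "\<Delta> \<le> eta" unfolding \<Delta>_def using d1 consts_pos(7) by auto
  have main: "\<forall>s. 0 \<le> s \<and> s \<le> t \<and> s \<le> real k * \<Delta> \<longrightarrow>
      (norm (L (x s)))^2 \<le> (norm (L (x 0)))^2 * exp (- c * s + kap * G s)" for k
  proof (induction k)
    case 0
    show ?case by (auto simp: G_def)
  next
    case (Suc k)
    show ?case
    proof (intro allI impI)
      fix s assume s: "0 \<le> s \<and> s \<le> t \<and> s \<le> real (Suc k) * \<Delta>"
      show "(norm (L (x s)))^2 \<le> (norm (L (x 0)))^2 * exp (- c * s + kap * G s)"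
      proof (cases "s \<le> real k * \<Delta>")
        case True
        then show ?thesis using Suc.IH s by blast
      next
        case False
        define s0 where "s0 = real k * \<Delta>"
        have s00: "0 \<le> s0" unfolding s0_def using D0 by simp
        have ss0: "s0 \<le> s" "s0 \<le> t" using False s unfolding s0_def by auto
        have hs: "s - s0 \<le> \<Delta>" using s unfolding s0_def by (simp add: algebra_simps)
        have Ws: "integral {s0..s} om = P s - P s0"
          using Henstock_Kurzweil_Integration.integral_combine[OF s00 ss0(1) omi[of 0 s]] unfolding P_def by simp
        have "dist (P s) (P s0) < eta" using d1P[of s0 s] s ss0 s00 hs Dd by (auto simp: dist_real_def)
        then have W: "integral {s0..s} om \<le> eta" unfolding Ws by (simp add: dist_real_def)
        have Gs: "G s = G s0 + integral {s0..s} (\<lambda>q. (om q)^2)"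
          using Henstock_Kurzweil_Integration.integral_combine[OF s00 ss0(1) om2i[of 0 s]] unfolding G_def by simp
        have step: "(norm (L (x s)))^2 \<le> (norm (L (x s0)))^2 * exp (- c * (s - s0) + kap * integral {s0..s} (\<lambda>q. (om q)^2))"
          by (rule Vstep2[OF s00 ss0(1)]) (use hs Dd W in auto)
        have IH: "(norm (L (x s0)))^2 \<le> (norm (L (x 0)))^2 * exp (- c * s0 + kap * G s0)"
          using Suc.IH s00 ss0 unfolding s0_def by auto
        have "(norm (L (x s)))^2 \<le> ((norm (L (x 0)))^2 * exp (- c * s0 + kap * G s0)) * exp (- c * (s - s0) + kap * integral {s0..s} (\<lambda>q. (om q)^2))"
          using step IH by (meson exp_ge_zero mult_right_mono order_trans)
        also have "\<dots> = (norm (L (x 0)))^2 * exp (- c * s + kap * G s)"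
          unfolding Gs by (simp add: mult.assoc exp_add[symmetric] algebra_simps)
        finally show ?thesis .
      qed
    qed
  qed
  obtain k :: nat where "t / \<Delta> \<le> real k" using real_arch_simple by blast
  then have "t \<le> real k * \<Delta>" using D0 by (simp add: field_simps)
  then show ?thesis using main[of k] t0 by auto
qed

lemma final:
  assumes t0: "0 \<le> t"
  shows "(norm (x t))^2 \<le> exp (kap * G t) * (norm (x 0))^2 * (M^2 / m^2) * exp (- c * t)"
proof -
  have "m * norm (x t) \<le> norm (L (x t))" by (rule Llow)
  then have "(m * norm (x t))^2 \<le> (norm (L (x t)))^2" using mpos by (intro power_mono) auto
  also have "\<dots> \<le> (norm (L (x 0)))^2 * exp (- c * t + kap * G t)" by (rule chain[OF t0])
  also have "\<dots> \<le> (M * norm (x 0))^2 * exp (- c * t + kap * G t)"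
    by (intro mult_right_mono power_mono Lup) auto
  finally have "(m * norm (x t))^2 \<le> (M * norm (x 0))^2 * (exp (- c * t) * exp (kap * G t))"
    unfolding exp_add[symmetric] .
  then have "m^2 * (norm (x t))^2 \<le> M^2 * (norm (x 0))^2 * exp (- c * t) * exp (kap * G t)"
    by (simp add: power_mult_distrib mult.assoc)
  then show ?thesis using mpos by (simp add: field_simps)
qed

end

lemma w_props:
  fixes N :: "'m::finite \<Rightarrow> real^'n^'n" and u :: "real \<Rightarrow> real^'m"
  assumes "L2 u"
  shows "u0 N u \<in> borel_measurable (lebesgue_on {0..})"
    and "integrable (lebesgue_on {0..}) (\<lambda>s. (norm (u0 N u s))^2)"
    and "\<And>s. norm (u0 N u s) \<le> norm (u s)"
proof -
  define F :: "real^'m \<Rightarrow> real^'m" where "F v = (\<chi> k. if N k = 0 then 0 else v $ k)" for v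
  have w: "u0 N u = (\<lambda>s. F (u s))" unfolding u0_def F_def by simp
  have "linear F" by (rule linearI) (auto simp: F_def Finite_Cartesian_Product.vec_eq_iff)
  then have "bounded_linear F" by (simp add: linear_conv_bounded_linear)
  then have cF: "continuous_on UNIV F" by (rule linear_continuous_on)
  have um: "u \<in> borel_measurable (lebesgue_on {0..})" using assms unfolding L2_def by simp
  show wm: "u0 N u \<in> borel_measurable (lebesgue_on {0..})"
    unfolding w by (rule borel_measurable_continuous_on[OF cF um])
  have Fle: "norm (F v) \<le> norm v" for v
    by (rule norm_le_componentwise_cart) (auto simp: F_def)
  show "\<And>s. norm (u0 N u s) \<le> norm (u s)" unfolding w by (rule Fle)
  show "integrable (lebesgue_on {0..}) (\<lambda>s. (norm (u0 N u s))^2)"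
  proof (rule Bochner_Integration.integrable_bound[where f="\<lambda>s. (norm (u s))^2"])
    show "integrable (lebesgue_on {0..}) (\<lambda>s. (norm (u s))^2)" using assms unfolding L2_def by simp
    show "(\<lambda>s. (norm (u0 N u s))^2) \<in> borel_measurable (lebesgue_on {0..})" using wm by measurable
    show "AE s in lebesgue_on {0..}. norm ((norm (u0 N u s))^2) \<le> norm ((norm (u s))^2)"
      unfolding w using Fle by (auto intro!: power_mono)
  qed
qed

lemma nonneg_int_props:
  fixes f :: "real \<Rightarrow> real"
  assumes fi: "integrable (lebesgue_on {0..}) f" and f0: "\<And>r. f r \<ge> 0"
  shows "\<And>s t. 0 \<le> s \<Longrightarrow> f integrable_on {s..t}"
    and "\<And>t. integral {0..t} f \<le> integral\<^sup>L (lebesgue_on {0..}) f"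
proof -
  have S: "{0::real..} \<in> sets lebesgue" by simp
  have fI: "f integrable_on {0..}" by (rule integrable_on_lebesgue_on[OF fi S])
  have fa: "f absolutely_integrable_on {0..}" by (rule nonnegative_absolutely_integrable_1[OF fI f0])
  show fst: "f integrable_on {s..t}" if "0 \<le> s" for s t
  proof -
    have "f absolutely_integrable_on {s..t}"
      by (rule absolutely_integrable_on_subinterval[OF fa]) (use that in auto)
    then show ?thesis by (simp add: absolutely_integrable_on_def)
  qed
  show "integral {0..t} f \<le> integral\<^sup>L (lebesgue_on {0..}) f" for t
  proof -
    have "integral {0..t} f \<le> integral {0..} f"
      by (rule integral_subset_le) (use fst fI f0 in auto)
    also have "\<dots> = integral\<^sup>L (lebesgue_on {0..}) f" by (rule lebesgue_integral_eq_integral[OF fi S, symmetric])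
    finally show ?thesis .
  qed
qed

lemma om_int:
  fixes w :: "real \<Rightarrow> real^'m"
  assumes wm: "w \<in> borel_measurable (lebesgue_on {0..})"
    and w2: "\<And>s t. 0 \<le> s \<Longrightarrow> (\<lambda>r. (norm (w r))^2) integrable_on {s..t}"
    and s: "0 \<le> s"
  shows "(\<lambda>r. norm (w r)) integrable_on {s..t}"
proof (rule measurable_bounded_by_integrable_imp_integrable_real)
  have "w \<in> borel_measurable (lebesgue_on {s..t})"
    by (rule measurable_restrict_mono[OF wm]) (use s in auto)
  then show "(\<lambda>r. norm (w r)) \<in> borel_measurable (lebesgue_on {s..t})" by measurable
  show "(\<lambda>r. 1 + (norm (w r))^2) integrable_on {s..t}" by (intro integrable_add integrable_const_ivl w2 s)
  show "\<bar>norm (w r)\<bar> \<le> 1 + (norm (w r))^2" for r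
  proof -
    have "0 \<le> (norm (w r) - 1)^2" by simp
    then have "2 * norm (w r) \<le> (norm (w r))^2 + 1" by (simp add: power2_diff)
    moreover have "0 \<le> (norm (w r))^2" by simp
    ultimately show ?thesis using norm_ge_zero[of "w r"] by linarith
  qed
  show "{s..t} \<in> sets lebesgue" by simp
qed

lemma main_from_L:
  fixes A :: "real^'n^'n" and N :: "'m::finite \<Rightarrow> real^'n^'n" and L :: "real^'n \<Rightarrow> 'b::real_inner"
  assumes linL: "linear L" and m0: "m > 0" and Llow: "\<forall>v. m * norm v \<le> norm (L v)" and c0: "c > 0"
    and LA: "\<forall>v. inner (L v) (L (A *v v)) \<le> - c * (norm (L v))^2"
  shows "\<exists>\<gamma> k1 k2. \<gamma> > 0 \<and> k1 > 0 \<and> k2 > 0 \<and>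
    (\<forall>u x0 x. L2 u \<longrightarrow> bilin_solution A N u x0 x \<longrightarrow>
      (\<forall>t\<ge>0. (norm (x t))\<^sup>2 \<le> exp (\<gamma>\<^sup>2 * L2norm_sq (u0 N u)) * (norm x0)\<^sup>2 * k1 * exp (- k2 * t)))"
proof -
  have blL: "bounded_linear L" using linL by (simp add: linear_conv_bounded_linear)
  obtain M where M0: "M > 0" and Mb: "\<And>v. norm (L v) \<le> norm v * M"
    using bounded_linear.pos_bounded[OF blL] by blast
  have blA: "bounded_linear (\<lambda>v. A *v v)" by (simp add: linear_conv_bounded_linear)
  obtain a where a0: "a > 0" and ab: "\<And>v. norm (A *v v) \<le> norm v * a"
    using bounded_linear.pos_bounded[OF blA] by blast
  have "\<forall>k. \<exists>B>0. \<forall>v. norm (N k *v v) \<le> norm v * B"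
  proof
    fix k
    have "bounded_linear (\<lambda>v. N k *v v)" by (simp add: linear_conv_bounded_linear)
    then show "\<exists>B>0. \<forall>v. norm (N k *v v) \<le> norm v * B" by (rule bounded_linear.pos_bounded)
  qed
  then obtain \<beta> where \<beta>0: "\<And>k. \<beta> k > 0" and \<beta>b: "\<And>k v. norm (N k *v v) \<le> norm v * \<beta> k"
    by metis
  define b where "b = (\<Sum>k\<in>UNIV. \<beta> k)"
  have b0: "b \<ge> 0" unfolding b_def using \<beta>0 by (simp add: sum_nonneg less_imp_le)
  define CC where "CC = 4 * M^2 / m^2"
  define C2 where "C2 = CC * (a*b + b + 2*b^2)"
  define eps where "eps = c / (2 * (C2 + 1))"
  define k4 where "k4 = 1 / (4 * eps)"
  define kap where "kap = (C2 + 1) * k4"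
  have C20: "C2 \<ge> 0" unfolding C2_def CC_def using a0 b0 m0 by simp
  have kap0: "kap > 0" unfolding kap_def k4_def eps_def using C20 c0 by simp
  show ?thesis
  proof (intro exI conjI allI impI)
    show "sqrt kap > 0" using kap0 by simp
    show "M^2 / m^2 > 0" using M0 m0 by simp
    show "c > 0" by (rule c0)
    fix u x0 x t
    assume uL2: "L2 u" and sol: "bilin_solution A N u x0 x" and t0: "(0::real) \<le> t"
    define w where "w = u0 N u"
    define om where "om r = norm (w r)" for r
    define p where "p r = (\<Sum>k\<in>UNIV. (u r $ k) *\<^sub>R (N k *v x r))" for r
    have wm: "w \<in> borel_measurable (lebesgue_on {0..})" and w2: "integrable (lebesgue_on {0..}) (\<lambda>s. (norm (w s))^2)"
      using w_props[OF uL2, of N] unfolding w_def by auto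
    have w2i: "\<And>s t. 0 \<le> s \<Longrightarrow> (\<lambda>r. (norm (w r))^2) integrable_on {s..t}"
      and w2le: "\<And>t. integral {0..t} (\<lambda>r. (norm (w r))^2) \<le> L2norm_sq w"
      using nonneg_int_props[OF w2] unfolding L2norm_sq_def by auto
    have pw: "p r = (\<Sum>k\<in>UNIV. (w r $ k) *\<^sub>R (N k *v x r))" for r
      unfolding p_def w_def u0_def by (intro sum.cong) auto
    interpret I: bilsys A L x p om a b c m M
    proof
      show "L (v1 + v2) = L v1 + L v2" for v1 v2 by (rule linear_add[OF linL])
      show "L (r *\<^sub>R v) = r *\<^sub>R L v" for r v by (rule linear_scale[OF linL])
      show "norm (L v) \<le> M * norm v" for v using Mb[of v] by (simp add: mult.commute)
      show "m * norm v \<le> norm (L v)" for v using Llow by simp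
      show "m > 0" "M > 0" "c > 0" "a \<ge> 0" "b \<ge> 0" using m0 M0 c0 a0 b0 by auto
      show "inner (L v) (L (A *v v)) \<le> - c * (norm (L v))^2" for v using LA by simp
      show "norm (A *v v) \<le> a * norm v" for v using ab[of v] by (simp add: mult.commute)
      show "om r \<ge> 0" for r unfolding om_def by simp
      show "norm (p r) \<le> b * om r * norm (x r)" for r
      proof -
        have "norm (p r) \<le> (\<Sum>k\<in>UNIV. norm ((w r $ k) *\<^sub>R (N k *v x r)))" unfolding pw by (rule norm_sum)
        also have "\<dots> \<le> (\<Sum>k\<in>UNIV. om r * norm (x r) * \<beta> k)"
        proof (rule sum_mono)
          fix k
          have "norm ((w r $ k) *\<^sub>R (N k *v x r)) = \<bar>w r $ k\<bar> * norm (N k *v x r)" by simp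
          also have "\<dots> \<le> om r * (norm (x r) * \<beta> k)" unfolding om_def
            by (intro mult_mono component_le_norm_cart \<beta>b) auto
          finally show "norm ((w r $ k) *\<^sub>R (N k *v x r)) \<le> om r * norm (x r) * \<beta> k" by simp
        qed
        also have "\<dots> = b * om r * norm (x r)" unfolding b_def by (simp add: sum_distrib_left algebra_simps)
        finally show ?thesis .
      qed
      show "((\<lambda>r. A *v x r + p r) has_integral (x t - x 0)) {0..t}" if "t \<ge> 0" for t
        using sol that unfolding bilin_solution_def p_def by auto
      show "(\<lambda>r. (om r)^2) integrable_on {s..t}" if "0 \<le> s" for s t
        unfolding om_def using w2i that by simp
      show "om integrable_on {s..t}" if "0 \<le> s" for s t
        using om_int[OF wm w2i that] unfolding om_def[abs_def] .
    qed
    have kapeq: "I.kap = kap"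
      unfolding I.kap_def I.k4_def I.eps_def I.C2_def I.CC_def kap_def k4_def eps_def C2_def CC_def ..
    have x00: "x 0 = x0" using sol unfolding bilin_solution_def by simp
    have "(norm (x t))^2 \<le> exp (I.kap * I.G t) * (norm (x 0))^2 * (M^2 / m^2) * exp (- c * t)"
      by (rule I.final[OF t0])
    also have "\<dots> \<le> exp ((sqrt kap)^2 * L2norm_sq (u0 N u)) * (norm x0)^2 * (M^2 / m^2) * exp (- c * t)"
    proof -
      have "I.G t \<le> L2norm_sq w" unfolding I.G_def om_def using w2le by simp
      then have "I.kap * I.G t \<le> kap * L2norm_sq w" unfolding kapeq using kap0 by (intro mult_left_mono) auto
      then have "exp (I.kap * I.G t) \<le> exp ((sqrt kap)^2 * L2norm_sq (u0 N u))"
        using kap0 unfolding w_def by simp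
      then show ?thesis unfolding x00 using M0 m0 by (intro mult_right_mono) auto
    qed
    finally show "(norm (x t))^2 \<le> exp ((sqrt kap)^2 * L2norm_sq (u0 N u)) * (norm x0)^2 * (M^2 / m^2) * exp (- c * t)" .
  qed
qed


theorem theorem4p4:
  fixes A :: "real^'n^'n" and N :: "'m::finite \<Rightarrow> real^'n^'n"
  assumes "\<forall>l\<in>mspectrum A. Re l < 0"
  shows "\<exists>\<gamma> k1 k2. \<gamma> > 0 \<and> k1 > 0 \<and> k2 > 0 \<and>
    (\<forall>u x0 x. L2 u \<longrightarrow> bilin_solution A N u x0 x \<longrightarrow>
      (\<forall>t\<ge>0. (norm (x t))\<^sup>2 \<le> exp (\<gamma>\<^sup>2 * L2norm_sq (u0 N u)) * (norm x0)\<^sup>2 * k1 * exp (- k2 * t)))"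
proof -
  obtain to :: "'n \<Rightarrow> nat" where bij: "bij_betw to UNIV {0..<CARD('n)}"
    using ex_bij_betw_finite_nat[of "UNIV::'n set"] by auto
  interpret idx to by (rule idx.intro[OF bij])
  obtain L :: "real^'n \<Rightarrow> complex^'n" and m c where lin: "linear L" and m: "m > 0" "\<forall>v. m * norm v \<le> norm (L v)"
    and c: "c > 0" "\<forall>v. inner (L v) (L (A *v v)) \<le> - c * (norm (L v))^2"
    using lyap_idx[OF assms] by blast
  show ?thesis by (rule main_from_L[OF lin m c])
qed

end
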